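(* Let $D$ be an integral domain with quotient field $K$, $\star$ a semistar operation on $D$, and let $\{(T_\lambda,\ast_\lambda):\lambda\in\Lambda\}$ be a direct family (as defined in the context) with $T=\bigcup_\lambda T_\lambda$. For $E\in\overline{\mathbf F}(T)$ set $E^{\ast^\Lambda}:=\bigcup_{\lambda\in\Lambda}E^{(\ast_\lambda)_f}$. Then: (1) $\ast^\Lambda$ is a semistar operation of finite type on $T$; (2) if $T_\lambda$ is $(\star,\ast_\lambda)$-linked to $D$ for every $\lambda\in\Lambda$, then $T$ is $(\star,\ast^\Lambda)$-linked to $D$; (3) if $T_\lambda$ is $(\star,t_{T_\lambda})$-linked to $D$ for every $\lambda\in\Lambda$, then $T$ is $(\star,t_T)$-linked to $D$.
   Context: Let $D$ be an integral domain with quotient field $K$. $\overline{\mathbf F}(D)$ denotes the set of all nonzero $D$-submodules of $K$ and $\mathbf f(D)$ the set of nonzero finitely generated $D$-submodules of $K$. A semistar operation on $D$ is a map $\star:\overline{\mathbf F}(D)\to\overline{\mathbf F}(D)$, $E\mapsto E^\star$, such that for all $0\ne x\in K$ and $E,F\in\overline{\mathbf F}(D)$: (1) $(xE)^\star=xE^\star$; (2) $E\subseteq F\Rightarrow E^\star\subseteq F^\star$; (3) $E\subseteq E^\star$ and $(E^\star)^\star=E^\star$. $\star_f$ is defined by $E^{\star_f}=\bigcup\{F^\star:F\in\mathbf f(D),F\subseteq E\}$; $\star$ is of finite type if $\star=\star_f$. An overring of $D$ is a ring $T$ with $D\subseteq T\subseteq K$; semistar operations on $T$ are defined likewise. For an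 overring $T$, $v_T$ is the semistar operation $E\mapsto (T:_K(T:_KE))$ on $T$ and $t_T:=(v_T)_f$. If $\star'$ is a semistar operation on an overring $T$, $T$ is $(\star,\star')$-linked to $D$ if for every nonzero finitely generated ideal $F\subseteq D$ with $F^\star=D^\star$ one has $(FT)^{\star'}=T^{\star'}$. A direct family: $\{T_\lambda:\lambda\in\Lambda\}$ is a family of overrings of $D$, directed under inclusion (for any $\alpha,\beta$ there is $\gamma$ with $T_\alpha,T_\beta\subseteq T_\gamma$), $\Lambda$ preordered by $\lambda'\le\lambda''$ iff $T_{\lambda'}\subseteq T_{\lambda''}$, $T=\bigcup_\lambda T_\lambda$, and $\ast_\lambda$ is a semistar operation on $T_\lambda$ for each $\lambda$ such that whenever $T_{\lambda_1}\subseteq T_{\lambda_2}$ and $H\in\mathbf f(T_{\lambda_1})$, one has $H^{\ast_{\lambda_1}}\subseteq (HT_{\lambda_2})^{\ast_{\lambda_2}}$. *)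

theory Defs
  imports Main
begin

text \<open>Ambient setting: the quotient field K of D is the whole field type 'a.
  Sets of elements of 'a stand for subsets of K.\<close>

definition subring :: "'a::field set \<Rightarrow> bool" where
  "subring R \<longleftrightarrow> 0 \<in> R \<and> 1 \<in> R \<and> (\<forall>x\<in>R. \<forall>y\<in>R. x + y \<in> R \<and> x - y \<in> R \<and> x * y \<in> R)"

definition domain_with_qf :: "'a::field set \<Rightarrow> bool" where
  "domain_with_qf D \<longleftrightarrow> subring D \<and> (\<forall>x. \<exists>a\<in>D. \<exists>b\<in>D. b \<noteq> 0 \<and> x = a / b)"

definition overring :: "'a::field set \<Rightarrow> 'a set \<Rightarrow> bool" where
  "overring D T \<longleftrightarrow> subring T \<and> D \<subseteq> T"

definition submod :: "'a::field set \<Rightarrow> 'a set \<Rightarrow> bool" where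
  "submod R E \<longleftrightarrow> 0 \<in> E \<and> (\<forall>x\<in>E. \<forall>y\<in>E. x + y \<in> E) \<and> (\<forall>r\<in>R. \<forall>x\<in>E. r * x \<in> E)"

definition Fbar :: "'a::field set \<Rightarrow> 'a set set" where
  "Fbar R = {E. submod R E \<and> E \<noteq> {0}}"

definition rspan :: "'a::field set \<Rightarrow> 'a set \<Rightarrow> 'a set" where
  "rspan R G = {\<Sum>g\<in>G. c g * g | c. \<forall>g\<in>G. c g \<in> R}"

text \<open>R-submodule generated by an arbitrary set S (used for FT, HT).\<close>
definition gen_mod :: "'a::field set \<Rightarrow> 'a set \<Rightarrow> 'a set" where
  "gen_mod R S = \<Union>{rspan R G | G. finite G \<and> G \<subseteq> S}"

definition fg :: "'a::field set \<Rightarrow> 'a set \<Rightarrow> bool" where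
  "fg R E \<longleftrightarrow> (\<exists>G. finite G \<and> E = rspan R G) \<and> E \<noteq> {0}"

definition smult_set :: "'a::field \<Rightarrow> 'a set \<Rightarrow> 'a set" where
  "smult_set x E = (\<lambda>e. x * e) ` E"

definition semistar_op :: "'a::field set \<Rightarrow> ('a set \<Rightarrow> 'a set) \<Rightarrow> bool" where
  "semistar_op R st \<longleftrightarrow>
     (\<forall>E\<in>Fbar R. st E \<in> Fbar R) \<and>
     (\<forall>x. \<forall>E\<in>Fbar R. x \<noteq> 0 \<longrightarrow> st (smult_set x E) = smult_set x (st E)) \<and>
     (\<forall>E\<in>Fbar R. \<forall>F\<in>Fbar R. E \<subseteq> F \<longrightarrow> st E \<subseteq> st F) \<and>
     (\<forall>E\<in>Fbar R. E \<subseteq> st E \<and> st (st E) = st E)"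

definition star_f :: "'a::field set \<Rightarrow> ('a set \<Rightarrow> 'a set) \<Rightarrow> 'a set \<Rightarrow> 'a set" where
  "star_f R st E = \<Union>{st F | F. fg R F \<and> F \<subseteq> E}"

definition finite_type :: "'a::field set \<Rightarrow> ('a set \<Rightarrow> 'a set) \<Rightarrow> bool" where
  "finite_type R st \<longleftrightarrow> (\<forall>E\<in>Fbar R. st E = star_f R st E)"

definition colon :: "'a::field set \<Rightarrow> 'a set \<Rightarrow> 'a set" where
  "colon A B = {x. \<forall>y\<in>B. x * y \<in> A}"

definition v_op :: "'a::field set \<Rightarrow> 'a set \<Rightarrow> 'a set" where
  "v_op T E = colon T (colon T E)"

definition t_op :: "'a::field set \<Rightarrow> 'a set \<Rightarrow> 'a set" where
  "t_op T = star_f T (v_op T)"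

definition linked :: "'a::field set \<Rightarrow> ('a set \<Rightarrow> 'a set) \<Rightarrow> 'a set \<Rightarrow> ('a set \<Rightarrow> 'a set) \<Rightarrow> bool" where
  "linked D st T st' \<longleftrightarrow>
     (\<forall>F. fg D F \<and> F \<subseteq> D \<and> st F = st D \<longrightarrow> st' (gen_mod T F) = st' T)"

definition direct_family ::
  "'a::field set \<Rightarrow> 'i set \<Rightarrow> ('i \<Rightarrow> 'a set) \<Rightarrow> ('i \<Rightarrow> 'a set \<Rightarrow> 'a set) \<Rightarrow> bool" where
  "direct_family D \<Lambda> Tf ops \<longleftrightarrow>
     \<Lambda> \<noteq> {} \<and>
     (\<forall>i\<in>\<Lambda>. overring D (Tf i) \<and> semistar_op (Tf i) (ops i)) \<and>
     (\<forall>a\<in>\<Lambda>. \<forall>b\<in>\<Lambda>. \<exists>c\<in>\<Lambda>. Tf a \<subseteq> Tf c \<and> Tf b \<subseteq> Tf c) \<and>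
     (\<forall>a1\<in>\<Lambda>. \<forall>a2\<in>\<Lambda>. Tf a1 \<subseteq> Tf a2 \<longrightarrow>
        (\<forall>H. fg (Tf a1) H \<longrightarrow> ops a1 H \<subseteq> ops a2 (gen_mod (Tf a2) H)))"

end

theory Submission
  imports Defs
begin


lemma subringD:
  assumes "subring R"
  shows "0 \<in> R" "1 \<in> R" "x \<in> R \<Longrightarrow> y \<in> R \<Longrightarrow> x + y \<in> R"
    "x \<in> R \<Longrightarrow> y \<in> R \<Longrightarrow> x * y \<in> R"
  using assms unfolding subring_def by auto

lemma submod_down: "submod R2 E \<Longrightarrow> R1 \<subseteq> R2 \<Longrightarrow> submod R1 E"
  unfolding submod_def by blast

lemma rspanI: "y = (\<Sum>g\<in>G. c g * g) \<Longrightarrow> \<forall>g\<in>G. c g \<in> R \<Longrightarrow> y \<in> rspan R G"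
  unfolding rspan_def by blast

lemma rspan_submod:
  assumes "subring R" shows "submod R (rspan R G)"
  unfolding submod_def
proof (intro conjI ballI)
  show "0 \<in> rspan R G" unfolding rspan_def
    by (rule CollectI, rule exI[of _ "\<lambda>_. 0"]) (use subringD[OF assms] in auto)
next
  fix x y assume "x \<in> rspan R G" "y \<in> rspan R G"
  then obtain c1 c2 where c: "x = (\<Sum>g\<in>G. c1 g * g)" "\<forall>g\<in>G. c1 g \<in> R"
     "y = (\<Sum>g\<in>G. c2 g * g)" "\<forall>g\<in>G. c2 g \<in> R" unfolding rspan_def by blast
  have "x + y = (\<Sum>g\<in>G. (c1 g + c2 g) * g)" using c by (simp add: sum.distrib distrib_right)
  moreover have "\<forall>g\<in>G. c1 g + c2 g \<in> R" using c subringD[OF assms] by auto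
  ultimately show "x + y \<in> rspan R G" by (rule rspanI)
next
  fix r x assume "r \<in> R" "x \<in> rspan R G"
  then obtain c where c: "x = (\<Sum>g\<in>G. c g * g)" "\<forall>g\<in>G. c g \<in> R" unfolding rspan_def by blast
  have "r * x = (\<Sum>g\<in>G. (r * c g) * g)" using c by (simp add: sum_distrib_left mult.assoc)
  moreover have "\<forall>g\<in>G. r * c g \<in> R" using c subringD[OF assms] \<open>r \<in> R\<close> by auto
  ultimately show "r * x \<in> rspan R G" by (rule rspanI)
qed

lemma rspan_sub:
  assumes "submod R E" "finite G" "G \<subseteq> E" shows "rspan R G \<subseteq> E"
proof -
  have "\<forall>c. (\<forall>g\<in>G. c g \<in> R) \<longrightarrow> (\<Sum>g\<in>G. c g * g) \<in> E"
    using assms(2,3)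
  proof (induction G rule: finite_induct)
    case empty then show ?case using assms(1) unfolding submod_def by simp
  next
    case (insert a G)
    show ?case
    proof (intro allI impI)
      fix c assume h: "\<forall>g\<in>insert a G. c g \<in> R"
      have 1: "(\<Sum>g\<in>G. c g * g) \<in> E" using insert h by auto
      have 2: "c a * a \<in> E" using assms(1) h insert.prems unfolding submod_def by auto
      show "(\<Sum>g\<in>insert a G. c g * g) \<in> E"
        using 1 2 insert.hyps assms(1) unfolding submod_def by simp
    qed
  qed
  then show ?thesis unfolding rspan_def by blast
qed

lemma rspan_gen:
  assumes "subring R" "finite G" shows "G \<subseteq> rspan R G"
proof
  fix x assume x: "x \<in> G"
  have "(\<Sum>g\<in>G. (if g = x then 1 else 0) * g) = (\<Sum>g\<in>G. if g = x then g else 0)"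
    by (rule sum.cong) auto
  also have "\<dots> = x" using x assms(2) by (simp add: sum.delta')
  finally have "x = (\<Sum>g\<in>G. (if g = x then 1 else 0) * g)" by simp
  moreover have "\<forall>g\<in>G. (if g = x then 1 else 0) \<in> R" using subringD[OF assms(1)] by auto
  ultimately show "x \<in> rspan R G" by (rule rspanI)
qed

lemma rspan_mono_R: "R1 \<subseteq> R2 \<Longrightarrow> rspan R1 G \<subseteq> rspan R2 G"
  unfolding rspan_def by blast

lemma gen_mod_rspan:
  assumes "subring R1" "subring R2" "R1 \<subseteq> R2" "finite G"
  shows "gen_mod R2 (rspan R1 G) = rspan R2 G"
proof
  show "gen_mod R2 (rspan R1 G) \<subseteq> rspan R2 G"
  proof
    fix x assume "x \<in> gen_mod R2 (rspan R1 G)"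
    then obtain G' where G': "finite G'" "G' \<subseteq> rspan R1 G" "x \<in> rspan R2 G'"
      unfolding gen_mod_def by blast
    have "G' \<subseteq> rspan R2 G" using G'(2) rspan_mono_R[OF assms(3)] by blast
    then have "rspan R2 G' \<subseteq> rspan R2 G" using rspan_sub[OF rspan_submod[OF assms(2)] G'(1)] by blast
    then show "x \<in> rspan R2 G" using G' by blast
  qed
next
  have "G \<subseteq> rspan R1 G" by (rule rspan_gen[OF assms(1,4)])
  then show "rspan R2 G \<subseteq> gen_mod R2 (rspan R1 G)"
    unfolding gen_mod_def using assms(4) by blast
qed

lemma fg_Fbar: "subring R \<Longrightarrow> fg R F \<Longrightarrow> F \<in> Fbar R"
  unfolding fg_def Fbar_def using rspan_submod by blast

lemma fg_join:
  assumes "subring R" "fg R F1" "fg R F2"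
  shows "\<exists>F3. fg R F3 \<and> F1 \<subseteq> F3 \<and> F2 \<subseteq> F3 \<and> (\<forall>E. submod R E \<and> F1 \<subseteq> E \<and> F2 \<subseteq> E \<longrightarrow> F3 \<subseteq> E)"
proof -
  obtain G1 G2 where G: "finite G1" "F1 = rspan R G1" "finite G2" "F2 = rspan R G2"
    using assms unfolding fg_def by blast
  define F3 where "F3 = rspan R (G1 \<union> G2)"
  have s3: "submod R F3" unfolding F3_def by (rule rspan_submod[OF assms(1)])
  have g3: "G1 \<union> G2 \<subseteq> F3" unfolding F3_def using G by (intro rspan_gen[OF assms(1)]) auto
  have 1: "F1 \<subseteq> F3" using rspan_sub[OF s3 G(1)] g3 G(2) by blast
  have 2: "F2 \<subseteq> F3" using rspan_sub[OF s3 G(3)] g3 G(4) by blast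
  have "0 \<in> F1" using rspan_submod[OF assms(1)] G(2) unfolding submod_def by blast
  then have "F3 \<noteq> {0}" using 1 assms(2) unfolding fg_def by blast
  then have "fg R F3" unfolding fg_def F3_def using G by blast
  moreover have "\<forall>E. submod R E \<and> F1 \<subseteq> E \<and> F2 \<subseteq> E \<longrightarrow> F3 \<subseteq> E"
  proof (intro allI impI)
    fix E assume "submod R E \<and> F1 \<subseteq> E \<and> F2 \<subseteq> E"
    then show "F3 \<subseteq> E" unfolding F3_def using rspan_sub[of R E "G1 \<union> G2"] G
        rspan_gen[OF assms(1) G(1)] rspan_gen[OF assms(1) G(3)] by blast
  qed
  ultimately show ?thesis using 1 2 by blast
qed

lemma smult_rspan:
  fixes x :: "'a::field"
  assumes "x \<noteq> 0" "finite G"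
  shows "smult_set x (rspan R G) = rspan R ((\<lambda>g. x * g) ` G)"
proof -
  have inj: "inj_on (\<lambda>g. x * g) G" using assms(1) by (auto simp: inj_on_def)
  show ?thesis
  proof
    show "smult_set x (rspan R G) \<subseteq> rspan R ((\<lambda>g. x * g) ` G)"
    proof
      fix y assume "y \<in> smult_set x (rspan R G)"
      then obtain c where c: "y = x * (\<Sum>g\<in>G. c g * g)" "\<forall>g\<in>G. c g \<in> R"
        unfolding smult_set_def rspan_def by blast
      have "(\<Sum>h\<in>(\<lambda>g. x * g) ` G. c (h / x) * h) = (\<Sum>g\<in>G. c (x * g / x) * (x * g))"
        by (subst sum.reindex[OF inj]) (simp add: o_def)
      also have "\<dots> = y" using assms(1) c(1) by (simp add: sum_distrib_left algebra_simps)
      finally have "y = (\<Sum>h\<in>(\<lambda>g. x * g) ` G. c (h / x) * h)" by simp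
      moreover have "\<forall>h\<in>(\<lambda>g. x * g) ` G. c (h / x) \<in> R" using c(2) assms(1) by auto
      ultimately show "y \<in> rspan R ((\<lambda>g. x * g) ` G)" by (rule rspanI)
    qed
  next
    show "rspan R ((\<lambda>g. x * g) ` G) \<subseteq> smult_set x (rspan R G)"
    proof
      fix y assume "y \<in> rspan R ((\<lambda>g. x * g) ` G)"
      then obtain c where c: "y = (\<Sum>h\<in>(\<lambda>g. x * g) ` G. c h * h)" "\<forall>h\<in>(\<lambda>g. x * g) ` G. c h \<in> R"
        unfolding rspan_def by blast
      have "y = (\<Sum>g\<in>G. c (x * g) * (x * g))" using c(1) by (simp add: sum.reindex[OF inj] o_def)
      also have "\<dots> = x * (\<Sum>g\<in>G. c (x * g) * g)" by (simp add: sum_distrib_left algebra_simps)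
      finally have yy: "y = x * (\<Sum>g\<in>G. c (x * g) * g)" .
      moreover have "\<forall>g\<in>G. c (x * g) \<in> R" using c(2) by auto
      ultimately have "x * (\<Sum>g\<in>G. c (x * g) * g) \<in> smult_set x (rspan R G)"
        unfolding smult_set_def by (intro imageI rspanI[OF refl]) 
      then show "y \<in> smult_set x (rspan R G)" using yy by simp
    qed
  qed
qed

lemma fg_smult:
  fixes x :: "'a::field"
  assumes "x \<noteq> 0" "fg R F" shows "fg R (smult_set x F)"
proof -
  obtain G where G: "finite G" "F = rspan R G" using assms unfolding fg_def by blast
  have "smult_set x F = rspan R ((\<lambda>g. x * g) ` G)" using smult_rspan[OF assms(1) G(1)] G(2) by simp
  moreover have "smult_set x F \<noteq> {0}"
  proof
    assume h: "smult_set x F = {0}"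
    have "F \<subseteq> {0}"
    proof
      fix e assume "e \<in> F" then have "x * e \<in> smult_set x F" unfolding smult_set_def by blast
      then show "e \<in> {0}" using h assms(1) by simp
    qed
    moreover have "F \<noteq> {}" using h unfolding smult_set_def by auto
    ultimately show False using assms(2) unfolding fg_def by blast
  qed
  ultimately show ?thesis using G(1) unfolding fg_def by blast
qed

lemma smult_inv:
  fixes x :: "'a::field"
  assumes "x \<noteq> 0" shows "smult_set (1/x) (smult_set x F) = F" "smult_set x (smult_set (1/x) F) = F"
  using assms unfolding smult_set_def by (auto simp: image_image)



locale dfam =
  fixes D :: "'a::field set" and \<Lambda> :: "'i set" and Tf :: "'i \<Rightarrow> 'a set" and ops :: "'i \<Rightarrow> 'a set \<Rightarrow> 'a set"
  assumes df: "direct_family D \<Lambda> Tf ops"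
begin

abbreviation "TT \<equiv> \<Union>i\<in>\<Lambda>. Tf i"
abbreviation "S i E \<equiv> star_f (Tf i) (ops i) E"

lemma dfD: "\<Lambda> \<noteq> {}"
     "\<forall>i\<in>\<Lambda>. overring D (Tf i) \<and> semistar_op (Tf i) (ops i)"
     "\<forall>a\<in>\<Lambda>. \<forall>b\<in>\<Lambda>. \<exists>c\<in>\<Lambda>. Tf a \<subseteq> Tf c \<and> Tf b \<subseteq> Tf c"
     "\<forall>a1\<in>\<Lambda>. \<forall>a2\<in>\<Lambda>. Tf a1 \<subseteq> Tf a2 \<longrightarrow>
        (\<forall>H. fg (Tf a1) H \<longrightarrow> ops a1 H \<subseteq> ops a2 (gen_mod (Tf a2) H))"
  using df unfolding direct_family_def by simp_all

lemma ne: "\<Lambda> \<noteq> {}" by (rule dfD(1))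
lemma sr: "i \<in> \<Lambda> \<Longrightarrow> subring (Tf i)" using dfD(2) unfolding overring_def by simp
lemma DT: "i \<in> \<Lambda> \<Longrightarrow> D \<subseteq> Tf i" using dfD(2) unfolding overring_def by simp
lemma ss: "i \<in> \<Lambda> \<Longrightarrow> semistar_op (Tf i) (ops i)" using dfD(2) by simp
lemma dir: "a \<in> \<Lambda> \<Longrightarrow> b \<in> \<Lambda> \<Longrightarrow> \<exists>c\<in>\<Lambda>. Tf a \<subseteq> Tf c \<and> Tf b \<subseteq> Tf c"
  using dfD(3) by simp
lemma compat: "a1 \<in> \<Lambda> \<Longrightarrow> a2 \<in> \<Lambda> \<Longrightarrow> Tf a1 \<subseteq> Tf a2 \<Longrightarrow> fg (Tf a1) H \<Longrightarrow>
   ops a1 H \<subseteq> ops a2 (gen_mod (Tf a2) H)"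
  using dfD(4) by simp

lemma ssD: assumes "i \<in> \<Lambda>" shows
     "\<forall>E\<in>Fbar (Tf i). ops i E \<in> Fbar (Tf i)"
     "\<forall>x. \<forall>E\<in>Fbar (Tf i). x \<noteq> 0 \<longrightarrow> ops i (smult_set x E) = smult_set x (ops i E)"
     "\<forall>E\<in>Fbar (Tf i). \<forall>F\<in>Fbar (Tf i). E \<subseteq> F \<longrightarrow> ops i E \<subseteq> ops i F"
     "\<forall>E\<in>Fbar (Tf i). E \<subseteq> ops i E \<and> ops i (ops i E) = ops i E"
  using ss[OF assms] unfolding semistar_op_def by simp_all

lemma opsF: "i \<in> \<Lambda> \<Longrightarrow> E \<in> Fbar (Tf i) \<Longrightarrow> ops i E \<in> Fbar (Tf i)"
  using ssD(1) by simp
lemma ops_mono: "i \<in> \<Lambda> \<Longrightarrow> E \<in> Fbar (Tf i) \<Longrightarrow> F \<in> Fbar (Tf i) \<Longrightarrow> E \<subseteq> F \<Longrightarrow> ops i E \<subseteq> ops i F"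
  using ssD(3) by simp
lemma ops_ext: "i \<in> \<Lambda> \<Longrightarrow> E \<in> Fbar (Tf i) \<Longrightarrow> E \<subseteq> ops i E"
  using ssD(4) by simp
lemma ops_idem: "i \<in> \<Lambda> \<Longrightarrow> E \<in> Fbar (Tf i) \<Longrightarrow> ops i (ops i E) = ops i E"
  using ssD(4) by simp
lemma ops_smult: "i \<in> \<Lambda> \<Longrightarrow> E \<in> Fbar (Tf i) \<Longrightarrow> x \<noteq> 0 \<Longrightarrow> ops i (smult_set x E) = smult_set x (ops i E)"
  using ssD(2) by simp

lemma ub: "finite J \<Longrightarrow> J \<subseteq> \<Lambda> \<Longrightarrow> \<exists>c\<in>\<Lambda>. \<forall>j\<in>J. Tf j \<subseteq> Tf c"
proof (induction J rule: finite_induct)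
  case empty then show ?case using ne by blast
next
  case (insert a J)
  then obtain b where b: "b \<in> \<Lambda>" "\<forall>j\<in>J. Tf j \<subseteq> Tf b" by auto
  obtain c where "c \<in> \<Lambda>" "Tf a \<subseteq> Tf c" "Tf b \<subseteq> Tf c" using dir[of a b] b insert.prems by auto
  then show ?case using b by blast
qed

lemma ub_set: "finite G \<Longrightarrow> G \<subseteq> TT \<Longrightarrow> \<exists>c\<in>\<Lambda>. G \<subseteq> Tf c"
proof (induction G rule: finite_induct)
  case empty then show ?case using ne by blast
next
  case (insert g G)
  then obtain b where b: "b \<in> \<Lambda>" "G \<subseteq> Tf b" by auto
  obtain a where a: "a \<in> \<Lambda>" "g \<in> Tf a" using insert.prems by auto
  obtain c where "c \<in> \<Lambda>" "Tf a \<subseteq> Tf c" "Tf b \<subseteq> Tf c" using dir[of a b] a b by auto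
  then show ?case using a b by blast
qed

lemma sub_T: "i \<in> \<Lambda> \<Longrightarrow> Tf i \<subseteq> TT" by blast

lemma T_sr: "subring TT"
  unfolding subring_def
proof (intro conjI ballI)
  obtain i where i: "i \<in> \<Lambda>" using ne by blast
  show "0 \<in> TT" "1 \<in> TT" using subringD[OF sr[OF i]] i by auto
next
  fix x y assume "x \<in> TT" "y \<in> TT"
  then obtain c where c: "c \<in> \<Lambda>" "{x, y} \<subseteq> Tf c" using ub_set[of "{x,y}"] by auto
  then show "x + y \<in> TT" "x - y \<in> TT" "x * y \<in> TT"
    using sr[OF c(1)] unfolding subring_def by auto
qed

lemma fg_E: "fg R F \<Longrightarrow> \<exists>G. finite G \<and> F = rspan R G" unfolding fg_def by blast

lemma fg_ops_sub: "i \<in> \<Lambda> \<Longrightarrow> fg (Tf i) F \<Longrightarrow> F \<subseteq> ops i F"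
  using ops_ext fg_Fbar sr by blast
lemma fg_ops_F: "i \<in> \<Lambda> \<Longrightarrow> fg (Tf i) F \<Longrightarrow> ops i F \<in> Fbar (Tf i)"
  using opsF fg_Fbar sr by blast

lemma S_mono_E: "E \<subseteq> E' \<Longrightarrow> S i E \<subseteq> S i E'"
  unfolding star_f_def by blast

lemma lift_fg:
  assumes "i \<in> \<Lambda>" "c \<in> \<Lambda>" "Tf i \<subseteq> Tf c" "fg (Tf i) F"
  shows "fg (Tf c) (gen_mod (Tf c) F) \<and> F \<subseteq> gen_mod (Tf c) F \<and>
     (\<forall>E. submod (Tf c) E \<and> F \<subseteq> E \<longrightarrow> gen_mod (Tf c) F \<subseteq> E)"
proof -
  obtain G where G: "finite G" "F = rspan (Tf i) G" using fg_E[OF assms(4)] by blast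
  have eq: "gen_mod (Tf c) F = rspan (Tf c) G" using gen_mod_rspan[OF sr[OF assms(1)] sr[OF assms(2)] assms(3) G(1)] G(2) by simp
  have sub: "F \<subseteq> rspan (Tf c) G" using G(2) rspan_mono_R[OF assms(3)] by blast
  have "fg (Tf c) (rspan (Tf c) G)" using G(1) sub assms(4) unfolding fg_def
    using rspan_submod[OF sr[OF assms(1)], of G] G(2) unfolding submod_def by blast
  moreover have "\<forall>E. submod (Tf c) E \<and> F \<subseteq> E \<longrightarrow> rspan (Tf c) G \<subseteq> E"
    using rspan_sub[of "Tf c" _ G] G rspan_gen[OF sr[OF assms(1)] G(1)] by blast
  ultimately show ?thesis using eq sub by simp
qed

lemma S_mono_idx:
  assumes "i \<in> \<Lambda>" "c \<in> \<Lambda>" "Tf i \<subseteq> Tf c" "submod (Tf c) E"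
  shows "S i E \<subseteq> S c E"
proof
  fix x assume "x \<in> S i E"
  then obtain F where F: "fg (Tf i) F" "F \<subseteq> E" "x \<in> ops i F" unfolding star_f_def by blast
  have L: "fg (Tf c) (gen_mod (Tf c) F)" "gen_mod (Tf c) F \<subseteq> E"
    using lift_fg[OF assms(1-3) F(1)] F(2) assms(4) by blast+
  have "x \<in> ops c (gen_mod (Tf c) F)" using compat[OF assms(1-3) F(1)] F(3) by blast
  then show "x \<in> S c E" using L unfolding star_f_def by blast
qed

lemma exists_fg:
  assumes "i \<in> \<Lambda>" "E \<noteq> {0}" "submod (Tf i) E"
  shows "\<exists>F. fg (Tf i) F \<and> F \<subseteq> E"
proof -
  obtain e where e: "e \<in> E" "e \<noteq> 0" using assms(2,3) unfolding submod_def by blast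
  have "e \<in> rspan (Tf i) {e}" using rspan_gen[OF sr[OF assms(1)], of "{e}"] by simp
  then have "fg (Tf i) (rspan (Tf i) {e})" unfolding fg_def using e(2) by blast
  moreover have "rspan (Tf i) {e} \<subseteq> E" using rspan_sub[OF assms(3)] e by simp
  ultimately show ?thesis by blast
qed

lemma fin_in_one:
  assumes "i \<in> \<Lambda>" "E \<noteq> {0}" "submod (Tf i) E" "finite G" "G \<subseteq> S i E"
  shows "\<exists>F. fg (Tf i) F \<and> F \<subseteq> E \<and> G \<subseteq> ops i F"
  using assms(4,5)
proof (induction G rule: finite_induct)
  case empty then show ?case using exists_fg[OF assms(1-3)] by blast
next
  case (insert g G)
  then obtain F2 where F2: "fg (Tf i) F2" "F2 \<subseteq> E" "G \<subseteq> ops i F2" by auto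
  have "g \<in> S i E" using insert.prems by simp
  then obtain F1 where F1: "fg (Tf i) F1" "F1 \<subseteq> E" "g \<in> ops i F1" unfolding star_f_def by blast
  obtain F3 where F3: "fg (Tf i) F3" "F1 \<subseteq> F3" "F2 \<subseteq> F3"
      "\<forall>E. submod (Tf i) E \<and> F1 \<subseteq> E \<and> F2 \<subseteq> E \<longrightarrow> F3 \<subseteq> E"
    using fg_join[OF sr[OF assms(1)] F1(1) F2(1)] by blast
  have F3E: "F3 \<subseteq> E" using F3(4) F1(2) F2(2) assms(3) by simp
  have "ops i F1 \<subseteq> ops i F3"
    by (rule ops_mono[OF assms(1) fg_Fbar[OF sr[OF assms(1)] F1(1)] fg_Fbar[OF sr[OF assms(1)] F3(1)] F3(2)])
  moreover have "ops i F2 \<subseteq> ops i F3"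
    by (rule ops_mono[OF assms(1) fg_Fbar[OF sr[OF assms(1)] F2(1)] fg_Fbar[OF sr[OF assms(1)] F3(1)] F3(3)])
  ultimately have "insert g G \<subseteq> ops i F3" using F1(3) F2(3) by blast
  then show ?case using F3(1) F3E by blast
qed

lemma S_submod:
  assumes "i \<in> \<Lambda>" "E \<noteq> {0}" "submod (Tf i) E"
  shows "submod (Tf i) (S i E)"
  unfolding submod_def
proof (intro conjI ballI)
  obtain F where F: "fg (Tf i) F" "F \<subseteq> E" using exists_fg[OF assms] by blast
  have "0 \<in> ops i F" using fg_ops_F[OF assms(1) F(1)] unfolding Fbar_def submod_def by blast
  then show "0 \<in> S i E" using F unfolding star_f_def by blast
next
  fix x y assume "x \<in> S i E" "y \<in> S i E"
  then obtain F where F: "fg (Tf i) F" "F \<subseteq> E" "{x,y} \<subseteq> ops i F" using fin_in_one[OF assms, of "{x,y}"] by auto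
  have "x + y \<in> ops i F" using fg_ops_F[OF assms(1) F(1)] F(3) unfolding Fbar_def submod_def by blast
  then show "x + y \<in> S i E" using F unfolding star_f_def by blast
next
  fix r x assume "r \<in> Tf i" "x \<in> S i E"
  then obtain F where F: "fg (Tf i) F" "F \<subseteq> E" "x \<in> ops i F" unfolding star_f_def by blast
  have "r * x \<in> ops i F" using fg_ops_F[OF assms(1) F(1)] F(3) \<open>r \<in> Tf i\<close> unfolding Fbar_def submod_def by blast
  then show "r * x \<in> S i E" using F unfolding star_f_def by blast
qed

lemma E_sub_S:
  assumes "i \<in> \<Lambda>" "E \<noteq> {0}" "submod (Tf i) E"
  shows "E \<subseteq> S i E"
proof
  fix e assume e: "e \<in> E"
  show "e \<in> S i E"
  proof (cases "e = 0")
    case True then show ?thesis using S_submod[OF assms] unfolding submod_def by simp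
  next
    case False
    have "e \<in> rspan (Tf i) {e}" using rspan_gen[OF sr[OF assms(1)], of "{e}"] by simp
    then have f: "fg (Tf i) (rspan (Tf i) {e})" unfolding fg_def using False by blast
    moreover have "rspan (Tf i) {e} \<subseteq> E" using rspan_sub[OF assms(3)] e by simp
    moreover have "e \<in> ops i (rspan (Tf i) {e})" using fg_ops_sub[OF assms(1) f] \<open>e \<in> rspan _ _\<close> by blast
    ultimately show ?thesis unfolding star_f_def by blast
  qed
qed

lemma S_smult:
  assumes "i \<in> \<Lambda>" "x \<noteq> 0"
  shows "S i (smult_set x E) = smult_set x (S i E)"
proof
  show "S i (smult_set x E) \<subseteq> smult_set x (S i E)"
  proof
    fix z assume "z \<in> S i (smult_set x E)"
    then obtain F where F: "fg (Tf i) F" "F \<subseteq> smult_set x E" "z \<in> ops i F" unfolding star_f_def by blast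
    define F' where "F' = smult_set (1/x) F"
    have f': "fg (Tf i) F'" unfolding F'_def by (rule fg_smult[OF _ F(1)]) (use assms(2) in simp)
    have FE: "F' \<subseteq> E"
    proof
      fix y assume "y \<in> F'"
      then obtain u where u: "u \<in> F" "y = (1/x) * u" unfolding F'_def smult_set_def by blast
      then obtain e where "e \<in> E" "u = x * e" using F(2) unfolding smult_set_def by blast
      then show "y \<in> E" using u assms(2) by simp
    qed
    have "F = smult_set x F'" unfolding F'_def using smult_inv(2)[OF assms(2)] by simp
    then have "ops i F = smult_set x (ops i F')"
      using ops_smult[OF assms(1) fg_Fbar[OF sr[OF assms(1)] f'] assms(2)] by simp
    then obtain w where w: "z = x * w" "w \<in> ops i F'" using F(3) unfolding smult_set_def by blast
    have "w \<in> S i E" unfolding star_f_def using f' FE w(2) by blast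
    then show "z \<in> smult_set x (S i E)" using w(1) unfolding smult_set_def by blast
  qed
next
  show "smult_set x (S i E) \<subseteq> S i (smult_set x E)"
  proof
    fix z assume "z \<in> smult_set x (S i E)"
    then obtain w where w: "z = x * w" "w \<in> S i E" unfolding smult_set_def by blast
    then obtain F where F: "fg (Tf i) F" "F \<subseteq> E" "w \<in> ops i F"
      unfolding star_f_def by blast
    have f': "fg (Tf i) (smult_set x F)" by (rule fg_smult[OF assms(2) F(1)])
    have s: "smult_set x F \<subseteq> smult_set x E" using F(2) unfolding smult_set_def by blast
    have "ops i (smult_set x F) = smult_set x (ops i F)"
      using ops_smult[OF assms(1) fg_Fbar[OF sr[OF assms(1)] F(1)] assms(2)] by simp
    moreover have "z \<in> smult_set x (ops i F)" using w(1) F(3) unfolding smult_set_def by blast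
    ultimately have "z \<in> ops i (smult_set x F)" by simp
    then show "z \<in> S i (smult_set x E)" using f' s unfolding star_f_def by blast
  qed
qed

end


lemma star_fI: "fg R F \<Longrightarrow> F \<subseteq> E \<Longrightarrow> z \<in> st F \<Longrightarrow> z \<in> star_f R st E"
  unfolding star_f_def by blast

lemma star_fE: "z \<in> star_f R st E \<Longrightarrow> (\<And>F. fg R F \<Longrightarrow> F \<subseteq> E \<Longrightarrow> z \<in> st F \<Longrightarrow> P) \<Longrightarrow> P"
  unfolding star_f_def by blast

lemma star_f_mono: "E \<subseteq> E' \<Longrightarrow> star_f R st E \<subseteq> star_f R st E'"
  unfolding star_f_def by blast

lemma submod_self: "subring R \<Longrightarrow> submod R R"
  unfolding subring_def submod_def by blast

lemma submod_preim: assumes "subring R" shows "submod R {h. y * h \<in> R}"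
  unfolding submod_def
proof (intro conjI ballI)
  show "0 \<in> {h. y * h \<in> R}" using subringD(1)[OF assms] by simp
next
  fix a b assume "a \<in> {h. y * h \<in> R}" "b \<in> {h. y * h \<in> R}"
  then show "a + b \<in> {h. y * h \<in> R}" using subringD(3)[OF assms] by (simp add: distrib_left)
next
  fix r a assume "r \<in> R" "a \<in> {h. y * h \<in> R}"
  then have "r * (y * a) \<in> R" using subringD(4)[OF assms] by simp
  then show "r * a \<in> {h. y * h \<in> R}" by (simp add: mult.left_commute)
qed

lemma v_mono: "H \<subseteq> E \<Longrightarrow> v_op R H \<subseteq> v_op R E"
  unfolding v_op_def colon_def by blast

lemma v_ext: "E \<subseteq> v_op R E"
  unfolding v_op_def colon_def by (auto simp: mult.commute)

lemma v_self: "subring R \<Longrightarrow> v_op R R = R"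
proof -
  assume R: "subring R"
  have "colon R R = R"
  proof
    show "colon R R \<subseteq> R"
    proof
      fix x assume "x \<in> colon R R"
      then have "x * 1 \<in> R" using subringD(2)[OF R] unfolding colon_def by blast
      then show "x \<in> R" by simp
    qed
    show "R \<subseteq> colon R R" using subringD(4)[OF R] unfolding colon_def by blast
  qed
  then show ?thesis unfolding v_op_def by simp
qed

lemma fg_super:
  assumes "subring R" "fg R F" "finite G" "F \<subseteq> rspan R' G"
  shows "fg R' (rspan R' G)"
proof -
  obtain G' where "F = rspan R G'" using assms(2) unfolding fg_def by blast
  then have "0 \<in> F" using rspan_submod[OF assms(1)] unfolding submod_def by blast
  moreover have "F \<noteq> {0}" using assms(2) unfolding fg_def by blast
  ultimately have "rspan R' G \<noteq> {0}" using assms(4) by blast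
  then show ?thesis unfolding fg_def using assms(3) by blast
qed

context dfam begin

abbreviation "L E \<equiv> \<Union>i\<in>\<Lambda>. S i E"

lemma L_mono: assumes "E \<subseteq> E'" shows "L E \<subseteq> L E'"
proof
  fix z assume "z \<in> L E"
  then obtain i where "i \<in> \<Lambda>" "z \<in> S i E" by blast
  then show "z \<in> L E'" using star_f_mono[OF assms, of "Tf i" "ops i"] by blast
qed

lemma FbarT: assumes "E \<in> Fbar TT" "i \<in> \<Lambda>" shows "submod (Tf i) E \<and> E \<noteq> {0}"
proof -
  have "submod TT E" "E \<noteq> {0}" using assms(1) unfolding Fbar_def by simp_all
  moreover have "Tf i \<subseteq> TT" using assms(2) by blast
  ultimately show ?thesis using submod_down by blast
qed

lemma L_ext: assumes "E \<in> Fbar TT" shows "E \<subseteq> L E"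
proof -
  obtain i where i: "i \<in> \<Lambda>" using ne by blast
  then show ?thesis using E_sub_S[OF i] FbarT[OF assms i] by blast
qed

lemma L_up: assumes "E \<in> Fbar TT" "a \<in> \<Lambda>" "b \<in> \<Lambda>" "x \<in> S a E" "y \<in> S b E"
  shows "\<exists>c\<in>\<Lambda>. x \<in> S c E \<and> y \<in> S c E \<and> Tf a \<subseteq> Tf c \<and> Tf b \<subseteq> Tf c"
proof -
  obtain c where c: "c \<in> \<Lambda>" "Tf a \<subseteq> Tf c" "Tf b \<subseteq> Tf c" using dir[OF assms(2,3)] by blast
  have "S a E \<subseteq> S c E" "S b E \<subseteq> S c E"
    using S_mono_idx[OF assms(2) c(1,2)] S_mono_idx[OF assms(3) c(1,3)] FbarT[OF assms(1) c(1)] by blast+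
  then show ?thesis using c assms(4,5) by blast
qed

lemma L_Fbar: assumes "E \<in> Fbar TT" shows "L E \<in> Fbar TT"
proof -
  have Sm: "submod (Tf c) (S c E)" if "c \<in> \<Lambda>" for c
    using S_submod[OF that] FbarT[OF assms that] by blast
  have "submod TT (L E)"
    unfolding submod_def
  proof (intro conjI ballI)
    obtain i where i: "i \<in> \<Lambda>" using ne by blast
    have "0 \<in> S i E" using Sm[OF i] unfolding submod_def by simp
    then show "0 \<in> L E" using i by blast
  next
    fix x y assume "x \<in> L E" "y \<in> L E"
    then obtain a b where ab: "a \<in> \<Lambda>" "b \<in> \<Lambda>" "x \<in> S a E" "y \<in> S b E" by blast
    obtain c where c: "c \<in> \<Lambda>" "x \<in> S c E" "y \<in> S c E"
      using L_up[OF assms ab] by blast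
    have "x + y \<in> S c E" using Sm[OF c(1)] c(2,3) unfolding submod_def by simp
    then show "x + y \<in> L E" using c(1) by blast
  next
    fix r x assume "r \<in> TT" "x \<in> L E"
    then obtain a b where ab: "a \<in> \<Lambda>" "b \<in> \<Lambda>" "x \<in> S a E" "r \<in> Tf b" by blast
    have "0 \<in> S b E" using Sm[OF ab(2)] unfolding submod_def by simp
    then obtain c where c: "c \<in> \<Lambda>" "x \<in> S c E" "Tf b \<subseteq> Tf c"
      using L_up[OF assms ab(1) ab(2) ab(3)] by blast
    have "r \<in> Tf c" using c(3) ab(4) by blast
    then have "r * x \<in> S c E" using Sm[OF c(1)] c(2) unfolding submod_def by simp
    then show "r * x \<in> L E" using c(1) by blast
  qed
  moreover have "L E \<noteq> {0}"
  proof
    assume "L E = {0}"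
    then have "E \<subseteq> {0}" using L_ext[OF assms] by simp
    moreover have "0 \<in> E" "E \<noteq> {0}" using assms unfolding Fbar_def submod_def by simp_all
    ultimately show False by blast
  qed
  ultimately show ?thesis unfolding Fbar_def by blast
qed

lemma L_smult: assumes "x \<noteq> 0" shows "L (smult_set x E) = smult_set x (L E)"
proof -
  have "L (smult_set x E) = (\<Union>i\<in>\<Lambda>. smult_set x (S i E))" using S_smult[OF _ assms] by simp
  also have "\<dots> = smult_set x (L E)" unfolding smult_set_def by blast
  finally show ?thesis .
qed

lemma L_idem: assumes "E \<in> Fbar TT" shows "L (L E) = L E"
proof
  show "L E \<subseteq> L (L E)" using L_ext[OF L_Fbar[OF assms]] .
next
  show "L (L E) \<subseteq> L E"
  proof
    fix z assume "z \<in> L (L E)"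
    then obtain i where i: "i \<in> \<Lambda>" "z \<in> S i (L E)" by blast
    then obtain F where F: "fg (Tf i) F" "F \<subseteq> L E" "z \<in> ops i F" unfolding star_f_def by blast
    obtain G where G: "finite G" "F = rspan (Tf i) G" using fg_E[OF F(1)] by blast
    have GF: "G \<subseteq> F" using rspan_gen[OF sr[OF i(1)] G(1)] G(2) by simp
    have "\<forall>g\<in>G. \<exists>a. a \<in> \<Lambda> \<and> g \<in> S a E" using GF F(2) by blast
    then obtain a where a: "\<forall>g\<in>G. a g \<in> \<Lambda> \<and> g \<in> S (a g) E" by metis
    obtain c where c: "c \<in> \<Lambda>" "\<forall>j\<in>insert i (a ` G). Tf j \<subseteq> Tf c"
      using ub[of "insert i (a ` G)"] G(1) a i(1) by auto
    have Ec: "submod (Tf c) E" "E \<noteq> {0}" using FbarT[OF assms c(1)] by auto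
    have "G \<subseteq> S c E"
    proof
      fix g assume "g \<in> G"
      then show "g \<in> S c E" using S_mono_idx[of "a g" c E] a c Ec(1) by blast
    qed
    then obtain F'' where F'': "fg (Tf c) F''" "F'' \<subseteq> E" "G \<subseteq> ops c F''"
      using fin_in_one[OF c(1) Ec(2) Ec(1) G(1)] by blast
    have Fb'': "ops c F'' \<in> Fbar (Tf c)" by (rule fg_ops_F[OF c(1) F''(1)])
    have ic: "Tf i \<subseteq> Tf c" using c(2) by blast
    have "submod (Tf i) (ops c F'')" using Fb'' submod_down[OF _ ic] unfolding Fbar_def by blast
    then have "F \<subseteq> ops c F''" using rspan_sub[OF _ G(1) F''(3)] G(2) by blast
    then have gm: "gen_mod (Tf c) F \<subseteq> ops c F''" "fg (Tf c) (gen_mod (Tf c) F)"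
      using lift_fg[OF i(1) c(1) ic F(1)] Fb'' unfolding Fbar_def by blast+
    have "z \<in> ops c (gen_mod (Tf c) F)" using compat[OF i(1) c(1) ic F(1)] F(3) by blast
    also have "\<dots> \<subseteq> ops c (ops c F'')"
      by (rule ops_mono[OF c(1) fg_Fbar[OF sr[OF c(1)] gm(2)] Fb'' gm(1)])
    also have "\<dots> = ops c F''" by (rule ops_idem[OF c(1) fg_Fbar[OF sr[OF c(1)] F''(1)]])
    finally have "z \<in> S c E" using F''(1,2) unfolding star_f_def by blast
    then show "z \<in> L E" using c(1) by blast
  qed
qed

lemma L_ft: assumes "E \<in> Fbar TT" shows "L E = star_f TT L E"
proof
  show "star_f TT L E \<subseteq> L E"
  proof
    fix z assume "z \<in> star_f TT L E"
    then obtain F where "F \<subseteq> E" "z \<in> L F" by (rule star_fE)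
    then show "z \<in> L E" using L_mono[of F E] by blast
  qed
next
  show "L E \<subseteq> star_f TT L E"
  proof
    fix z assume "z \<in> L E"
    then obtain i where i: "i \<in> \<Lambda>" "z \<in> S i E" by blast
    obtain F where F: "fg (Tf i) F" "F \<subseteq> E" "z \<in> ops i F" using i(2) by (rule star_fE)
    obtain G where G: "finite G" "F = rspan (Tf i) G" using fg_E[OF F(1)] by blast
    have FF: "F \<subseteq> rspan TT G" using G(2) rspan_mono_R[OF sub_T[OF i(1)]] by simp
    have fgT: "fg TT (rspan TT G)" by (rule fg_super[OF sr[OF i(1)] F(1) G(1) FF])
    have sE: "submod TT E" using assms unfolding Fbar_def by simp
    have "G \<subseteq> E" using rspan_gen[OF sr[OF i(1)] G(1)] G(2) F(2) by simp
    then have RE: "rspan TT G \<subseteq> E" by (rule rspan_sub[OF sE G(1)])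
    have "z \<in> S i (rspan TT G)" by (rule star_fI[where st="ops i", OF F(1) FF F(3)])
    then have "z \<in> L (rspan TT G)" using i(1) by blast
    then show "z \<in> star_f TT L E" by (rule star_fI[where st=L, OF fgT RE])
  qed
qed

lemma part1: "semistar_op TT L \<and> finite_type TT L"
proof
  show "semistar_op TT L" unfolding semistar_op_def
  proof (intro conjI ballI allI impI)
    fix E assume "E \<in> Fbar TT" then show "L E \<in> Fbar TT" by (rule L_Fbar)
  next
    fix x :: 'a and E assume "x \<noteq> 0" then show "L (smult_set x E) = smult_set x (L E)" by (rule L_smult)
  next
    fix E F :: "'a set" assume "E \<subseteq> F" then show "L E \<subseteq> L F" by (rule L_mono)
  next
    fix E assume "E \<in> Fbar TT" then show "E \<subseteq> L E" by (rule L_ext)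
  next
    fix E assume "E \<in> Fbar TT" then show "L (L E) = L E" by (rule L_idem)
  qed
  show "finite_type TT L" unfolding finite_type_def
  proof
    fix E assume "E \<in> Fbar TT" then show "L E = star_f TT L E" by (rule L_ft)
  qed
qed

end


lemma linkedD: "linked D st T st' \<Longrightarrow> fg D F \<Longrightarrow> F \<subseteq> D \<Longrightarrow> st F = st D \<Longrightarrow> st' (gen_mod T F) = st' T"
  unfolding linked_def by blast

lemma colonI: "(\<And>y. y \<in> B \<Longrightarrow> x * y \<in> A) \<Longrightarrow> x \<in> colon A B"
  unfolding colon_def by blast
lemma colonD: "x \<in> colon A B \<Longrightarrow> y \<in> B \<Longrightarrow> x * y \<in> A"
  unfolding colon_def by blast

context dfam begin

lemma TfF: assumes "c \<in> \<Lambda>" shows "Tf c \<in> Fbar (Tf c)"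
proof -
  have "1 \<in> Tf c" by (rule subringD(2)[OF sr[OF assms]])
  then have "Tf c \<noteq> {0}" by force
  then show ?thesis unfolding Fbar_def using submod_self[OF sr[OF assms]] by blast
qed

lemma part2:
  assumes D: "subring D" and lk: "\<forall>i\<in>\<Lambda>. linked D st (Tf i) (ops i)"
  shows "linked D st TT L"
  unfolding linked_def
proof (intro allI impI)
  fix F assume F: "fg D F \<and> F \<subseteq> D \<and> st F = st D"
  obtain G0 where G0: "finite G0" "F = rspan D G0" using F fg_E by blast
  obtain i0 where i0: "i0 \<in> \<Lambda>" using ne by blast
  have DTT: "D \<subseteq> TT" using DT[OF i0] i0 by blast
  have gT: "gen_mod TT F = rspan TT G0" using gen_mod_rspan[OF D T_sr DTT G0(1)] G0(2) by simp
  have G0F: "G0 \<subseteq> F" using rspan_gen[OF D G0(1)] G0(2) by simp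
  have "gen_mod TT F \<subseteq> TT" unfolding gT using rspan_sub[OF submod_self[OF T_sr] G0(1)] G0F F DTT by blast
  then have le: "L (gen_mod TT F) \<subseteq> L TT" by (rule L_mono)
  have ge: "L TT \<subseteq> L (gen_mod TT F)"
  proof
    fix z assume "z \<in> L TT"
    then obtain i where i: "i \<in> \<Lambda>" "z \<in> S i TT" by blast
    obtain H where H: "fg (Tf i) H" "H \<subseteq> TT" "z \<in> ops i H" using i(2) by (rule star_fE)
    obtain G where G: "finite G" "H = rspan (Tf i) G" using fg_E[OF H(1)] by blast
    have "G \<subseteq> H" using rspan_gen[OF sr[OF i(1)] G(1)] G(2) by simp
    then have "G \<subseteq> TT" using H(2) by simp
    then obtain b where b: "b \<in> \<Lambda>" "G \<subseteq> Tf b" using ub_set[OF G(1)] by blast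
    obtain c where c: "c \<in> \<Lambda>" "Tf i \<subseteq> Tf c" "Tf b \<subseteq> Tf c" using dir[OF i(1) b(1)] by blast
    have smc: "submod (Tf i) (Tf c)" using submod_down[OF submod_self[OF sr[OF c(1)]] c(2)] .
    have "G \<subseteq> Tf c" using b(2) c(3) by simp
    then have Hc: "H \<subseteq> Tf c" using rspan_sub[OF smc G(1)] G(2) by simp
    have lf: "fg (Tf c) (gen_mod (Tf c) H)" "\<forall>E. submod (Tf c) E \<and> H \<subseteq> E \<longrightarrow> gen_mod (Tf c) H \<subseteq> E"
      using lift_fg[OF i(1) c(1) c(2) H(1)] by simp_all
    have gm: "gen_mod (Tf c) H \<subseteq> Tf c" using lf(2) submod_self[OF sr[OF c(1)]] Hc by simp
    have "z \<in> ops c (gen_mod (Tf c) H)" using compat[OF i(1) c(1) c(2) H(1)] H(3) by blast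
    also have "\<dots> \<subseteq> ops c (Tf c)"
      by (rule ops_mono[OF c(1) fg_Fbar[OF sr[OF c(1)] lf(1)] TfF[OF c(1)] gm])
    also have "\<dots> = ops c (gen_mod (Tf c) F)" using linkedD[of D st "Tf c" "ops c" F] lk c(1) F by simp
    finally have z: "z \<in> ops c (gen_mod (Tf c) F)" .
    have gc: "gen_mod (Tf c) F = rspan (Tf c) G0"
      using gen_mod_rspan[OF D sr[OF c(1)] DT[OF c(1)] G0(1)] G0(2) by simp
    have FF: "F \<subseteq> rspan (Tf c) G0" using G0(2) rspan_mono_R[OF DT[OF c(1)]] by simp
    have fD: "fg D F" using F by simp
    have f1: "fg (Tf c) (rspan (Tf c) G0)" by (rule fg_super[OF D fD G0(1) FF])
    have s1: "rspan (Tf c) G0 \<subseteq> gen_mod TT F" unfolding gT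
      by (rule rspan_mono_R[OF sub_T[OF c(1)]])
    have "z \<in> S c (gen_mod TT F)" by (rule star_fI[where st="ops c", OF f1 s1 z[unfolded gc]])
    then show "z \<in> L (gen_mod TT F)" using c(1) by blast
  qed
  show "L (gen_mod TT F) = L TT" using le ge by blast
qed

lemma part3:
  assumes D: "subring D" and lk: "\<forall>i\<in>\<Lambda>. linked D st (Tf i) (t_op (Tf i))"
  shows "linked D st TT (t_op TT)"
  unfolding linked_def
proof (intro allI impI)
  fix F assume F: "fg D F \<and> F \<subseteq> D \<and> st F = st D"
  obtain G0 where G0: "finite G0" "F = rspan D G0" using F fg_E by blast
  obtain i0 where i0: "i0 \<in> \<Lambda>" using ne by blast
  have DTT: "D \<subseteq> TT" using DT[OF i0] i0 by blast
  have gT: "gen_mod TT F = rspan TT G0" using gen_mod_rspan[OF D T_sr DTT G0(1)] G0(2) by simp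
  have G0F: "G0 \<subseteq> F" using rspan_gen[OF D G0(1)] G0(2) by simp
  have HT: "gen_mod TT F \<subseteq> TT" unfolding gT using rspan_sub[OF submod_self[OF T_sr] G0(1)] G0F F DTT by blast
  have FH: "F \<subseteq> gen_mod TT F" unfolding gT using G0(2) rspan_mono_R[OF DTT] by blast
  have FH': "F \<subseteq> rspan TT G0" using FH gT by simp
  have fD: "fg D F" using F by blast
  have fgH: "fg TT (gen_mod TT F)" unfolding gT by (rule fg_super[OF D fD G0(1) FH'])
  have le: "t_op TT (gen_mod TT F) \<subseteq> t_op TT TT" unfolding t_op_def using HT by (rule star_f_mono)
  have tTT: "t_op TT TT \<subseteq> TT" unfolding t_op_def star_f_def using v_mono[of _ TT TT] v_self[OF T_sr] by blast
  have one: "1 \<in> v_op TT (gen_mod TT F)"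
    unfolding v_op_def colon_def
  proof (intro CollectI ballI)
    fix y assume y: "y \<in> {x. \<forall>y\<in>gen_mod TT F. x * y \<in> TT}"
    have "(\<lambda>g. y * g) ` G0 \<subseteq> TT" using y G0F FH by blast
    then obtain b where b: "b \<in> \<Lambda>" "(\<lambda>g. y * g) ` G0 \<subseteq> Tf b" using ub_set[of "(\<lambda>g. y * g) ` G0"] G0(1) by blast
    have gb: "gen_mod (Tf b) F = rspan (Tf b) G0"
      using gen_mod_rspan[OF D sr[OF b(1)] DT[OF b(1)] G0(1)] G0(2) by simp
    have "rspan (Tf b) G0 \<subseteq> {h. y * h \<in> Tf b}"
      using rspan_sub[OF submod_preim[OF sr[OF b(1)]] G0(1)] b(2) by blast
    have r1: "rspan (Tf b) {1} \<subseteq> Tf b" using rspan_sub[OF submod_self[OF sr[OF b(1)]]] subringD(2)[OF sr[OF b(1)]] by simp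
    have "1 \<in> rspan (Tf b) {1}" using rspan_gen[OF sr[OF b(1)], of "{1}"] by simp
    then have f1: "fg (Tf b) (rspan (Tf b) {1})" unfolding fg_def by force
    have "1 \<in> v_op (Tf b) (rspan (Tf b) {1})" using v_ext \<open>1 \<in> rspan (Tf b) {1}\<close> by blast
    then have "1 \<in> t_op (Tf b) (Tf b)" unfolding t_op_def star_f_def using f1 r1 by blast
    also have "\<dots> = t_op (Tf b) (gen_mod (Tf b) F)" using linkedD[of D st "Tf b" "t_op (Tf b)" F] lk b(1) F by simp
    finally obtain H' where H': "fg (Tf b) H'" "H' \<subseteq> rspan (Tf b) G0" "1 \<in> v_op (Tf b) H'"
      unfolding t_op_def star_f_def gb by blast
    have "y \<in> colon (Tf b) H'" unfolding colon_def using H'(2) \<open>rspan (Tf b) G0 \<subseteq> _\<close> by blast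
    then have "1 * y \<in> Tf b" using H'(3) unfolding v_op_def colon_def by blast
    then show "1 * y \<in> TT" using b(1) by auto
  qed
  have "TT \<subseteq> v_op TT (gen_mod TT F)"
  proof
    fix r assume r: "r \<in> TT"
    show "r \<in> v_op TT (gen_mod TT F)" unfolding v_op_def
    proof (rule colonI)
      fix y assume y: "y \<in> colon TT (gen_mod TT F)"
      have "1 * y \<in> TT" using colonD[OF one[unfolded v_op_def] y] by (simp add: mult.commute)
      then have "y \<in> TT" by simp
      then show "r * y \<in> TT" using r subringD(4)[OF T_sr] by blast
    qed
  qed
  then have "TT \<subseteq> t_op TT (gen_mod TT F)" unfolding t_op_def star_f_def using fgH by blast
  then show "t_op TT (gen_mod TT F) = t_op TT TT" using le tTT by blast
qed

end

theorem lemma3p5: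
  fixes D :: "'a::field set" and st :: "'a set \<Rightarrow> 'a set"
    and \<Lambda> :: "'i set" and Tf :: "'i \<Rightarrow> 'a set" and ops :: "'i \<Rightarrow> 'a set \<Rightarrow> 'a set"
  assumes "domain_with_qf D"
    and "semistar_op D st"
    and "direct_family D \<Lambda> Tf ops"
  defines "T \<equiv> \<Union>i\<in>\<Lambda>. Tf i"
    and "starL \<equiv> (\<lambda>E. \<Union>i\<in>\<Lambda>. star_f (Tf i) (ops i) E)"
  shows "(semistar_op T starL \<and> finite_type T starL) \<and>
         ((\<forall>i\<in>\<Lambda>. linked D st (Tf i) (ops i)) \<longrightarrow> linked D st T starL) \<and>
         ((\<forall>i\<in>\<Lambda>. linked D st (Tf i) (t_op (Tf i))) \<longrightarrow> linked D st T (t_op T))"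
proof -
  interpret dfam D \<Lambda> Tf ops by (rule dfam.intro[OF assms(3)])
  have Dsr: "subring D" using assms(1) unfolding domain_with_qf_def by simp
  have p1: "semistar_op T starL \<and> finite_type T starL" unfolding T_def starL_def by (rule part1)
  have p2: "(\<forall>i\<in>\<Lambda>. linked D st (Tf i) (ops i)) \<longrightarrow> linked D st T starL"
    unfolding T_def starL_def using part2[OF Dsr] by blast
  have p3: "(\<forall>i\<in>\<Lambda>. linked D st (Tf i) (t_op (Tf i))) \<longrightarrow> linked D st T (t_op T)"
    unfolding T_def using part3[OF Dsr] by blast
  show ?thesis using p1 p2 p3 by blast
qed

end
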